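(* Let $c:\mathbb{R}^d\to[0,\infty)$ be a cost function, let $(\alpha_k)_{k\ge 1}$ be a sequence of real weights, and let $\lambda>0$. Consider the optimization problem $$\min_{K\ge 0}\ \min_{\bm{\beta}=(\beta_1,\dots,\beta_K)\in\mathcal{P}_K}\Big(c(\beta_K)+\lambda\sum_{k=1}^K\alpha_k c(\beta_k)\Big),$$ where $\beta_0=0$. If $K^*$ and $\bm{\beta}^*\in\mathcal{P}_{K^*}$ attain this minimum, then the model $\beta^*_{K^*}$ is Pareto-optimal with respect to the two objectives $c(\cdot)$ and $\mathcal{L}_\alpha(\cdot)$ on $\mathbb{R}^d$, i.e. there is no $\beta\in\mathbb{R}^d$ with $c(\beta)\le c(\beta^*_{K^*})$ and $\mathcal{L}_\alpha(\beta)\le\mathcal{L}_\alpha(\beta^*_{K^*})$ with at least one inequality strict.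
   Context: For $\beta\in\mathbb{R}^d$, let $\mathcal{S}(\beta)=\{\theta\in\mathbb{R}^d:\|\beta-\theta\|_0\le 1\}$. A coordinate path of length $K\ge 0$ is a sequence $\bm{\beta}=(\beta_1,\dots,\beta_K)$ with $\beta_k\in\mathcal{S}(\beta_{k-1})$ for $1\le k\le K$, where $\beta_0=0$. $\mathcal{P}_K$ is the set of coordinate paths of length $K$, $\mathcal{P}=\bigcup_{K\ge 0}\mathcal{P}_K$, and for a model $\beta$, $\mathcal{P}(\beta)$ is the set of paths whose last model is $\beta$ (for $\beta=0$ including the empty path). The path loss is $\mathcal{L}_\alpha(\bm{\beta})=\sum_{k=1}^{|\bm{\beta}|}\alpha_k c(\beta_k)$ (zero for the empty path), and the model loss is $\mathcal{L}_\alpha(\beta)=\min_{\bm{\beta}\in\mathcal{P}(\beta)}\mathcal{L}_\alpha(\bm{\beta})$. *)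

theory Defs
  imports "HOL-Analysis.Analysis"
begin

definition l0_dist :: "real^'d \<Rightarrow> real^'d \<Rightarrow> nat" where
  "l0_dist \<beta> \<theta> = card {i. \<beta> $ i \<noteq> \<theta> $ i}"

definition coord_nbhd :: "real^'d \<Rightarrow> (real^'d) set" where
  "coord_nbhd \<beta> = {\<theta>. l0_dist \<beta> \<theta> \<le> 1}"

text \<open>A coordinate path (beta_1,...,beta_K) is the list [beta_1,...,beta_K]; beta_0 = 0.\<close>

definition is_coord_path :: "(real^'d) list \<Rightarrow> bool" where
  "is_coord_path bs \<longleftrightarrow>
     (\<forall>k < length bs. bs ! k \<in> coord_nbhd (if k = 0 then 0 else bs ! (k - 1)))"

definition paths_K :: "nat \<Rightarrow> (real^'d) list set" where
  "paths_K K = {bs. is_coord_path bs \<and> length bs = K}"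

definition last_model :: "(real^'d) list \<Rightarrow> real^'d" where
  "last_model bs = (if bs = [] then 0 else last bs)"

definition paths_to :: "real^'d \<Rightarrow> (real^'d) list set" where
  "paths_to \<beta> = {bs. is_coord_path bs \<and> last_model bs = \<beta>}"

definition path_loss :: "(nat \<Rightarrow> real) \<Rightarrow> (real^'d \<Rightarrow> real) \<Rightarrow> (real^'d) list \<Rightarrow> real" where
  "path_loss \<alpha> c bs = (\<Sum>k < length bs. \<alpha> (k + 1) * c (bs ! k))"

definition model_loss :: "(nat \<Rightarrow> real) \<Rightarrow> (real^'d \<Rightarrow> real) \<Rightarrow> real^'d \<Rightarrow> real" where
  "model_loss \<alpha> c \<beta> = Inf (path_loss \<alpha> c ` paths_to \<beta>)"

end

theory Submission
  imports Defs
begin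

lemma snoc_path:
  assumes "is_coord_path bs" "t \<in> coord_nbhd (last_model bs)"
  shows "is_coord_path (bs @ [t])"
  unfolding is_coord_path_def
proof (intro allI impI)
  fix k assume k: "k < length (bs @ [t])"
  show "(bs @ [t]) ! k \<in> coord_nbhd (if k = 0 then 0 else (bs @ [t]) ! (k - 1))"
  proof (cases "k < length bs")
    case True
    then show ?thesis using assms(1) unfolding is_coord_path_def
      by (auto simp: nth_append)
  next
    case False
    then have kk: "k = length bs" using k by simp
    show ?thesis
    proof (cases "bs = []")
      case True then show ?thesis using kk assms(2) by (simp add: last_model_def)
    next
      case False
      then have "last bs = bs ! (k - 1)" using kk by (simp add: last_conv_nth)
      then show ?thesis using kk False assms(2) by (auto simp: nth_append last_model_def)
    qed
  qed
qed

lemma nbhd_single: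
  fixes a b :: "real^'d"
  assumes "\<And>i. i \<noteq> x \<Longrightarrow> a $ i = b $ i"
  shows "b \<in> coord_nbhd a"
proof -
  have "{i. a $ i \<noteq> b $ i} \<subseteq> {x}" using assms by auto
  then have "card {i. a $ i \<noteq> b $ i} \<le> card {x}" by (intro card_mono) auto
  then show ?thesis by (simp add: coord_nbhd_def l0_dist_def)
qed

lemma reach_S:
  fixes \<beta> :: "real^'d"
  assumes "finite S"
  shows "\<exists>bs. is_coord_path bs \<and> last_model bs = (\<chi> i. if i \<in> S then \<beta> $ i else 0)"
  using assms
proof (induction S rule: finite_induct)
  case empty
  have "(\<chi> i. if i \<in> {} then \<beta> $ i else 0) = (0::real^'d)"
    by (simp add: vec_eq_iff)
  then show ?case
    by (intro exI[of _ "[]"]) (simp add: is_coord_path_def last_model_def)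
next
  case (insert x F)
  then obtain bs where bs: "is_coord_path bs"
    "last_model bs = (\<chi> i. if i \<in> F then \<beta> $ i else 0)" by blast
  have "(\<chi> i. if i \<in> insert x F then \<beta> $ i else 0) \<in> coord_nbhd (last_model bs)"
    unfolding bs(2) by (rule nbhd_single[of x]) auto
  then have "is_coord_path (bs @ [\<chi> i. if i \<in> insert x F then \<beta> $ i else 0])"
    using snoc_path bs(1) by blast
  then show ?case by (intro exI[of _ "bs @ [\<chi> i. if i \<in> insert x F then \<beta> $ i else 0]"]) (simp add: last_model_def)
qed

lemma reach:
  fixes \<beta> :: "real^'d"
  shows "paths_to \<beta> \<noteq> {}"
proof -
  obtain bs where "is_coord_path bs" "last_model bs = (\<chi> i. if i \<in> UNIV then \<beta> $ i else 0)"
    using reach_S[of UNIV \<beta>] by auto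
  then show ?thesis by (auto simp: paths_to_def vec_eq_iff)
qed

theorem proposition1:
  fixes c :: "real^'d \<Rightarrow> real" and \<alpha> :: "nat \<Rightarrow> real" and lam :: real
    and Kstar :: nat and bstar :: "(real^'d) list"
  assumes c_nonneg: "\<And>\<beta>. c \<beta> \<ge> 0"
    and lam_pos: "lam > 0"
    and bstar_path: "bstar \<in> paths_K Kstar"
    and bstar_min: "\<And>K bs. bs \<in> paths_K K \<Longrightarrow>
        c (last_model bstar) + lam * path_loss \<alpha> c bstar \<le> c (last_model bs) + lam * path_loss \<alpha> c bs"
  shows "\<not> (\<exists>\<beta>. c \<beta> \<le> c (last_model bstar)
              \<and> model_loss \<alpha> c \<beta> \<le> model_loss \<alpha> c (last_model bstar)
              \<and> (c \<beta> < c (last_model bstar) \<or> model_loss \<alpha> c \<beta> < model_loss \<alpha> c (last_model bstar)))"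
proof
  define M where "M = c (last_model bstar) + lam * path_loss \<alpha> c bstar"
  have lb: "(M - c \<gamma>) / lam \<le> path_loss \<alpha> c bs" if "bs \<in> paths_to \<gamma>" for \<gamma> bs
  proof -
    have "bs \<in> paths_K (length bs)" "last_model bs = \<gamma>"
      using that by (auto simp: paths_to_def paths_K_def)
    then have "M \<le> c \<gamma> + lam * path_loss \<alpha> c bs" using bstar_min unfolding M_def by blast
    then show ?thesis using lam_pos by (simp add: field_simps)
  qed
  have bdd: "bdd_below (path_loss \<alpha> c ` paths_to \<gamma>)" for \<gamma>
    using lb by (intro bdd_belowI[of _ "(M - c \<gamma>) / lam"]) auto
  have L_ge: "(M - c \<gamma>) / lam \<le> model_loss \<alpha> c \<gamma>" for \<gamma>
    unfolding model_loss_def using reach[of \<gamma>] lb by (intro cInf_greatest) auto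
  have "bstar \<in> paths_to (last_model bstar)"
    using bstar_path by (auto simp: paths_to_def paths_K_def)
  then have L_le: "model_loss \<alpha> c (last_model bstar) \<le> path_loss \<alpha> c bstar"
    unfolding model_loss_def using bdd by (intro cInf_lower) auto
  assume "\<exists>\<beta>. c \<beta> \<le> c (last_model bstar)
              \<and> model_loss \<alpha> c \<beta> \<le> model_loss \<alpha> c (last_model bstar)
              \<and> (c \<beta> < c (last_model bstar) \<or> model_loss \<alpha> c \<beta> < model_loss \<alpha> c (last_model bstar))"
  then obtain \<beta> where b: "c \<beta> \<le> c (last_model bstar)"
    "model_loss \<alpha> c \<beta> \<le> model_loss \<alpha> c (last_model bstar)"
    "c \<beta> < c (last_model bstar) \<or> model_loss \<alpha> c \<beta> < model_loss \<alpha> c (last_model bstar)"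
    by blast
  have g: "M \<le> c \<beta> + lam * model_loss \<alpha> c \<beta>"
    using L_ge[of \<beta>] lam_pos by (simp add: field_simps)
  have "lam * model_loss \<alpha> c \<beta> \<le> lam * model_loss \<alpha> c (last_model bstar)"
    using b(2) lam_pos by simp
  moreover have "lam * model_loss \<alpha> c (last_model bstar) \<le> lam * path_loss \<alpha> c bstar"
    using L_le lam_pos by simp
  moreover have "c \<beta> < c (last_model bstar) \<or> lam * model_loss \<alpha> c \<beta> < lam * model_loss \<alpha> c (last_model bstar)"
    using b(3) lam_pos by simp
  ultimately show False using g b(1) unfolding M_def by linarith
qed

end
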